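(* Let $n\ge 2$ and let $\mathcal{A}(L_n)=\{(x,y)\in L_n\times L_n: y\le x\}\setminus\{(0,0)\}$, ordered componentwise. Then $\operatorname{Der}(L_n)$ with pointwise order is a lattice (with pointwise $\vee$ and $\wedge$), and the map $(x,y)\mapsto (d_x)^y$ is a lattice isomorphism from $\mathcal{A}(L_n)$ onto $\operatorname{Der}(L_n)$, where $(d_x)^y(1)=y$ and $(d_x)^y(z)=x\odot z$ for $z\ne 1$.
   Context: An MV-algebra is an algebra $(A,\oplus,{}^*,0)$ of type $(2,1,0)$ satisfying the usual axioms; $1=0^*$, $x\odot y=(x^*\oplus y^* )^*$, natural order $x\le y$ iff $x^*\oplus y=1$, $x\vee y=(x\odot y^* )\oplus y$, $x\wedge y=x\odot(x^*\oplus y)$. A $(\odot,\vee)$-derivation on $A$ is a map $d:A\to A$ with $d(x\odot y)=(d(x)\odot y)\vee(x\odot d(y))$ for all $x,y\in A$; $\operatorname{Der}(A)$ is the set of these, ordered by $d\preceq d'$ iff $d(x)\le d'(x)$ for all $x$. $L_n=\{0,\frac1{n-1},\dots,\frac{n-2}{n-1},1\}$ with $x\oplus y=\min\{1,x+y\}$, $x^*=1-x$, $x\odot y=\max\{0,x+y-1\}$. *)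

theory Defs
  imports Complex_Main "HOL-Library.FuncSet"
begin

definition Ln :: "nat \<Rightarrow> real set" where
  "Ln n = {real k / real (n - 1) | k. k \<le> n - 1}"

definition mv_oplus :: "real \<Rightarrow> real \<Rightarrow> real" where
  "mv_oplus x y = min 1 (x + y)"

definition mv_star :: "real \<Rightarrow> real" where
  "mv_star x = 1 - x"

definition mv_odot :: "real \<Rightarrow> real \<Rightarrow> real" where
  "mv_odot x y = mv_star (mv_oplus (mv_star x) (mv_star y))"

definition mv_le :: "real \<Rightarrow> real \<Rightarrow> bool" where
  "mv_le x y \<longleftrightarrow> mv_oplus (mv_star x) y = 1"

definition mv_sup :: "real \<Rightarrow> real \<Rightarrow> real" where
  "mv_sup x y = mv_oplus (mv_odot x (mv_star y)) y"

definition mv_inf :: "real \<Rightarrow> real \<Rightarrow> real" where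
  "mv_inf x y = mv_odot x (mv_oplus (mv_star x) y)"

definition Der :: "nat \<Rightarrow> (real \<Rightarrow> real) set" where
  "Der n = {d \<in> Ln n \<rightarrow>\<^sub>E Ln n.
     \<forall>x\<in>Ln n. \<forall>y\<in>Ln n. d (mv_odot x y) = mv_sup (mv_odot (d x) y) (mv_odot x (d y))}"

definition der_le :: "nat \<Rightarrow> (real \<Rightarrow> real) \<Rightarrow> (real \<Rightarrow> real) \<Rightarrow> bool" where
  "der_le n d d' \<longleftrightarrow> (\<forall>x\<in>Ln n. mv_le (d x) (d' x))"

definition der_sup :: "nat \<Rightarrow> (real \<Rightarrow> real) \<Rightarrow> (real \<Rightarrow> real) \<Rightarrow> (real \<Rightarrow> real)" where
  "der_sup n d d' = (\<lambda>x\<in>Ln n. mv_sup (d x) (d' x))"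

definition der_inf :: "nat \<Rightarrow> (real \<Rightarrow> real) \<Rightarrow> (real \<Rightarrow> real) \<Rightarrow> (real \<Rightarrow> real)" where
  "der_inf n d d' = (\<lambda>x\<in>Ln n. mv_inf (d x) (d' x))"

definition AL :: "nat \<Rightarrow> (real \<times> real) set" where
  "AL n = {(x, y). x \<in> Ln n \<and> y \<in> Ln n \<and> mv_le y x} - {(0, 0)}"

definition A_le :: "real \<times> real \<Rightarrow> real \<times> real \<Rightarrow> bool" where
  "A_le p q \<longleftrightarrow> mv_le (fst p) (fst q) \<and> mv_le (snd p) (snd q)"

definition dxy :: "nat \<Rightarrow> real \<Rightarrow> real \<Rightarrow> (real \<Rightarrow> real)" where
  "dxy n x y = (\<lambda>z\<in>Ln n. if z = 1 then y else mv_odot x z)"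

end

theory Submission imports Defs begin

lemma odot_eq: "mv_odot x y = max 0 (x + y - 1)"
  by (simp add: mv_odot_def mv_oplus_def mv_star_def)
lemma le_eq: "mv_le x y \<longleftrightarrow> x \<le> y"
  by (simp add: mv_le_def mv_oplus_def mv_star_def min_def)
lemma sup_eq: "x \<le> 1 \<Longrightarrow> y \<le> 1 \<Longrightarrow> mv_sup x y = max x y"
  by (simp add: mv_sup_def mv_odot_def mv_oplus_def mv_star_def)
lemma inf_eq: "0 \<le> x \<Longrightarrow> 0 \<le> y \<Longrightarrow> x \<le> 1 \<Longrightarrow> y \<le> 1 \<Longrightarrow> mv_inf x y = min x y"
  by (simp add: mv_inf_def mv_odot_def mv_oplus_def mv_star_def)

lemma Ln_iff: "z \<in> Ln n \<longleftrightarrow> (\<exists>k\<le>n-1. z = real k / real (n-1))"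
  by (auto simp: Ln_def)

lemma Ln_range: "n \<ge> 2 \<Longrightarrow> z \<in> Ln n \<Longrightarrow> 0 \<le> z \<and> z \<le> 1"
  by (auto simp: Ln_iff divide_le_eq)

lemma Ln_0: "0 \<in> Ln n" by (auto simp: Ln_iff intro: exI[of _ 0])
lemma Ln_1: "n \<ge> 2 \<Longrightarrow> 1 \<in> Ln n" by (auto simp: Ln_iff intro!: exI[of _ "n-1"])
lemma Ln_h: "n \<ge> 2 \<Longrightarrow> 1 / real (n-1) \<in> Ln n" by (auto simp: Ln_iff intro!: exI[of _ 1])

lemma Ln_compl: assumes "n \<ge> 2" "z \<in> Ln n" shows "1 - z \<in> Ln n"
proof -
  obtain k where k: "k \<le> n-1" "z = real k / real (n-1)" using assms by (auto simp: Ln_iff)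
  have "1 - z = real (n-1-k) / real (n-1)" using k assms by (simp add: of_nat_diff field_simps)
  thus ?thesis unfolding Ln_iff by (intro exI[of _ "n-1-k"] conjI) simp_all
qed

lemma Ln_odot: assumes "n \<ge> 2" "x \<in> Ln n" "y \<in> Ln n" shows "max 0 (x + y - 1) \<in> Ln n"
proof -
  obtain k where k: "k \<le> n-1" "x = real k / real (n-1)" using assms by (auto simp: Ln_iff)
  obtain l where l: "l \<le> n-1" "y = real l / real (n-1)" using assms by (auto simp: Ln_iff)
  show ?thesis
  proof (cases "k + l \<le> n - 1")
    case True
    have "x + y - 1 = (real (k+l) - real (n-1)) / real (n-1)" using k l assms by (simp add: field_simps)
    also have "\<dots> \<le> 0" using True by (simp add: divide_le_0_iff)
    finally show ?thesis using Ln_0 by simp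
  next
    case False
    have "x + y - 1 = real (k+l-(n-1)) / real (n-1)" using k l assms False by (simp add: of_nat_diff field_simps)
    moreover have "k+l-(n-1) \<le> n-1" using k l by simp
    ultimately show ?thesis by (auto simp: Ln_iff max_def)
  qed
qed

lemma Ln_pos: assumes "n \<ge> 2" "z \<in> Ln n" "z \<noteq> 0" shows "1 / real (n-1) \<le> z"
proof -
  obtain k where k: "k \<le> n-1" "z = real k / real (n-1)" using assms by (auto simp: Ln_iff)
  then have "k \<ge> 1" using assms by (cases k) auto
  thus ?thesis using k assms by (simp add: divide_right_mono)
qed

lemma Ln_lt1: assumes "n \<ge> 2" "z \<in> Ln n" "z \<noteq> 1"
  shows "\<exists>k\<le>n-2. z = real k * (1 / real (n-1))"
proof -
  obtain k where k: "k \<le> n-1" "z = real k / real (n-1)" using assms by (auto simp: Ln_iff)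
  then have "k \<noteq> n-1" using assms by auto
  then show ?thesis using k by (intro exI[of _ k]) auto
qed

lemma frac_le: "(m::real) > 0 \<Longrightarrow> (k/m \<le> 1 - 1/m) \<longleftrightarrow> (k \<le> m - 1)"
  by (simp add: field_simps)

lemma Ln_le: assumes "n \<ge> 2" "z \<in> Ln n" "z \<noteq> 1" shows "z \<le> 1 - 1 / real (n-1)"
proof -
  obtain k where k: "k \<le> n-2" "z = real k * (1 / real (n-1))" using Ln_lt1[OF assms] by auto
  have "real k \<le> real (n-1) - 1" using k assms by linarith
  thus ?thesis using k assms frac_le[of "real (n-1)" "real k"] by simp
qed

lemma Ln_succ: assumes "n \<ge> 2" "z \<in> Ln n" "z \<le> 1 - 1/real (n-1)" shows "z + 1/real (n-1) \<in> Ln n"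
proof -
  obtain k where k: "k \<le> n-1" "z = real k / real (n-1)" using assms by (auto simp: Ln_iff)
  have "real k \<le> real (n-1) - 1" using k assms frac_le[of "real (n-1)" "real k"] by simp
  hence "Suc k \<le> n-1" by linarith
  moreover have "z + 1/real (n-1) = real (Suc k) / real (n-1)" using k by (simp add: add_divide_distrib)
  ultimately show ?thesis unfolding Ln_iff by blast
qed


lemma dxy_Der: assumes n: "n \<ge> 2" and x: "x \<in> Ln n" and y: "y \<in> Ln n" and yx: "y \<le> x"
  shows "dxy n x y \<in> Der n"
  unfolding Der_def
proof (intro CollectI conjI ballI)
  show "dxy n x y \<in> Ln n \<rightarrow>\<^sub>E Ln n"
    using y Ln_odot[OF n x] by (auto simp: dxy_def odot_eq)
next
  fix a b assume a: "a \<in> Ln n" and b: "b \<in> Ln n"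
  have ab: "mv_odot a b \<in> Ln n" using Ln_odot[OF n a b] by (simp add: odot_eq)
  note r = Ln_range[OF n x] Ln_range[OF n y] Ln_range[OF n a] Ln_range[OF n b]
  have "mv_odot a b \<noteq> 1" if "a \<noteq> 1 \<or> b \<noteq> 1" using r that by (auto simp: odot_eq max_def)
  then show "dxy n x y (mv_odot a b) = mv_sup (mv_odot (dxy n x y a) b) (mv_odot a (dxy n x y b))"
    using r yx a b ab
    by (cases "a = 1"; cases "b = 1") (auto simp: dxy_def odot_eq mv_sup_def mv_oplus_def mv_star_def max_def min_def)
qed


lemma Der_form: assumes n: "n \<ge> 2" and d: "d \<in> Der n"
  shows "\<exists>x y. (x, y) \<in> AL n \<and> d = dxy n x y"
proof -
  define h where "h = 1 / real (n-1)"
  have hpos: "h > 0" using n by (simp add: h_def)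
  have dE: "d \<in> Ln n \<rightarrow>\<^sub>E Ln n" using d by (simp add: Der_def)
  have D: "\<And>a b. a \<in> Ln n \<Longrightarrow> b \<in> Ln n \<Longrightarrow> d (mv_odot a b) = mv_sup (mv_odot (d a) b) (mv_odot a (d b))"
    using d by (simp add: Der_def)
  have dL: "\<And>a. a \<in> Ln n \<Longrightarrow> d a \<in> Ln n" using dE by auto
  have dR: "\<And>a. a \<in> Ln n \<Longrightarrow> 0 \<le> d a \<and> d a \<le> 1" using dL Ln_range[OF n] by blast
  have L0: "0 \<in> Ln n" by (rule Ln_0)
  have L1: "1 \<in> Ln n" using n by (rule Ln_1)
  have Lh1: "1 - h \<in> Ln n" unfolding h_def using Ln_compl[OF n Ln_h[OF n]] .
  have d0: "d 0 = 0"
    using D[OF L0 L0] dR[OF L0]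
    by (simp add: odot_eq mv_sup_def mv_oplus_def mv_star_def max_def min_def split: if_splits)
  have dle: "d a \<le> a" if a: "a \<in> Ln n" for a
  proof -
    have ca: "1 - a \<in> Ln n" using Ln_compl[OF n a] .
    have "mv_odot a (1 - a) = 0" by (simp add: odot_eq)
    hence "0 = mv_sup (mv_odot (d a) (1 - a)) (mv_odot a (d (1 - a)))" using D[OF a ca] d0 by simp
    thus ?thesis using dR[OF a] dR[OF ca] Ln_range[OF n a]
      by (simp add: odot_eq mv_sup_def mv_oplus_def mv_star_def max_def min_def split: if_splits)
  qed
  define c where "c = d (1 - h)"
  have cR: "0 \<le> c" "c \<le> 1 - h" using dR[OF Lh1] dle[OF Lh1] by (auto simp: c_def)
  have Lk: "real k * h \<in> Ln n" if "k \<le> n - 1" for k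
    using that unfolding Ln_iff h_def by auto
  have claim: "d (real k * h) = max 0 (real k * h + c + h - 1)" if "k \<le> n - 2" for k
    using that
  proof (induction k rule: inc_induct)
    case base
    have "real (n-2) * h = 1 - h" using n by (simp add: h_def of_nat_diff field_simps)
    then show ?case using cR by (simp add: c_def)
  next
    case (step k)
    have a: "real (Suc k) * h \<in> Ln n" using step by (intro Lk) simp
    have "mv_odot (real (Suc k) * h) (1 - h) = real k * h" using hpos
      by (simp add: odot_eq algebra_simps max_def)
    then have "d (real k * h) = mv_sup (mv_odot (d (real (Suc k) * h)) (1 - h)) (mv_odot (real (Suc k) * h) c)"
      using D[OF a Lh1] by (simp add: c_def)
    also have "\<dots> = max 0 (real k * h + c + h - 1)"
      using step.IH dR[OF a] Ln_range[OF n a] cR hpos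
      by (simp add: odot_eq mv_sup_def mv_oplus_def mv_star_def max_def min_def algebra_simps)
    finally show ?case .
  qed
  define x where "x = c + h"
  define y where "y = d 1"
  have cL: "c \<in> Ln n" using dL[OF Lh1] by (simp add: c_def)
  have xL: "x \<in> Ln n" unfolding x_def h_def using Ln_succ[OF n cL] cR by (simp add: h_def)
  have yL: "y \<in> Ln n" using dL[OF L1] by (simp add: y_def)
  have "mv_odot 1 (1 - h) = 1 - h" using cR by (simp add: odot_eq)
  hence "c = mv_sup (mv_odot y (1 - h)) (mv_odot 1 c)" using D[OF L1 Lh1] by (simp add: c_def y_def)
  hence yx: "y \<le> x" using dR[OF L1] cR hpos
    by (simp add: x_def y_def odot_eq mv_sup_def mv_oplus_def mv_star_def max_def min_def split: if_splits)
  have AL: "(x, y) \<in> AL n" using xL yL yx hpos cR by (auto simp: AL_def le_eq x_def)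
  have "d = dxy n x y"
  proof
    fix z show "d z = dxy n x y z"
    proof (cases "z \<in> Ln n")
      case False thus ?thesis using dE by (auto simp: dxy_def PiE_def extensional_def)
    next
      case True
      show ?thesis
      proof (cases "z = 1")
        case True thus ?thesis using L1 by (simp add: dxy_def y_def)
      next
        case False
        obtain k where k: "k \<le> n-2" "z = real k * h" using Ln_lt1[OF n \<open>z \<in> Ln n\<close> False] h_def by auto
        show ?thesis using claim[OF k(1)] k \<open>z \<in> Ln n\<close> False
          by (simp add: dxy_def odot_eq x_def algebra_simps)
      qed
    qed
  qed
  with AL show ?thesis by blast
qed


lemma AL_props: assumes n: "n \<ge> 2" and p: "(x, y) \<in> AL n"
  shows "x \<in> Ln n" "y \<in> Ln n" "y \<le> x" "1 / real (n-1) \<le> x" "x \<le> 1" "0 \<le> y"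
proof -
  show xL: "x \<in> Ln n" and yL: "y \<in> Ln n" and yx: "y \<le> x" using p by (auto simp: AL_def le_eq)
  have "x \<noteq> 0" using p yx Ln_range[OF n yL] by (auto simp: AL_def)
  thus "1 / real (n-1) \<le> x" using Ln_pos[OF n xL] by simp
  show "x \<le> 1" "0 \<le> y" using Ln_range[OF n xL] Ln_range[OF n yL] by auto
qed

lemma dxy_at: "z \<in> Ln n \<Longrightarrow> dxy n x y z = (if z = 1 then y else max 0 (x + z - 1))"
  by (simp add: dxy_def odot_eq)

lemma dxy_ext: "z \<notin> Ln n \<Longrightarrow> dxy n x y z = undefined"
  by (simp add: dxy_def)

theorem theorem5p6:
  fixes n :: nat
  assumes "n \<ge> 2"
  shows "(\<forall>d\<in>Der n. \<forall>d'\<in>Der n. der_sup n d d' \<in> Der n \<and> der_inf n d d' \<in> Der n)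
    \<and> bij_betw (\<lambda>(x, y). dxy n x y) (AL n) (Der n)
    \<and> (\<forall>p\<in>AL n. \<forall>q\<in>AL n.
          A_le p q \<longleftrightarrow> der_le n (dxy n (fst p) (snd p)) (dxy n (fst q) (snd q)))
    \<and> (\<forall>p\<in>AL n. \<forall>q\<in>AL n.
          dxy n (mv_sup (fst p) (fst q)) (mv_sup (snd p) (snd q))
            = der_sup n (dxy n (fst p) (snd p)) (dxy n (fst q) (snd q))
        \<and> dxy n (mv_inf (fst p) (fst q)) (mv_inf (snd p) (snd q))
            = der_inf n (dxy n (fst p) (snd p)) (dxy n (fst q) (snd q)))"
proof -
  note n = assms
  define h where "h = 1 / real (n-1)"
  have hpos: "h > 0" using n by (simp add: h_def)
  have L1: "1 \<in> Ln n" using n by (rule Ln_1)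
  have Lh1: "1 - h \<in> Ln n" unfolding h_def using Ln_compl[OF n Ln_h[OF n]] .
  have h1: "1 - h \<noteq> 1" using hpos by simp
  have AP: "x \<in> Ln n \<and> y \<in> Ln n \<and> y \<le> x \<and> h \<le> x \<and> x \<le> 1 \<and> 0 \<le> y" if "(x, y) \<in> AL n" for x y
    using AL_props[OF n that] by (simp add: h_def)
  have inj: "x1 = x2 \<and> y1 = y2" if p: "(x1, y1) \<in> AL n" and q: "(x2, y2) \<in> AL n"
    and e: "dxy n x1 y1 = dxy n x2 y2" for x1 y1 x2 y2
  proof -
    have "dxy n x1 y1 1 = dxy n x2 y2 1" "dxy n x1 y1 (1-h) = dxy n x2 y2 (1-h)" using e by auto
    thus ?thesis using dxy_at[OF L1] dxy_at[OF Lh1] h1 AP[OF p] AP[OF q] by (simp add: max_def split: if_splits)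
  qed
  have ord: "A_le (x1, y1) (x2, y2) \<longleftrightarrow> der_le n (dxy n x1 y1) (dxy n x2 y2)"
    if p: "(x1, y1) \<in> AL n" and q: "(x2, y2) \<in> AL n" for x1 y1 x2 y2
  proof
    assume "A_le (x1, y1) (x2, y2)"
    thus "der_le n (dxy n x1 y1) (dxy n x2 y2)"
      by (auto simp: A_le_def der_le_def le_eq dxy_at)
  next
    assume "der_le n (dxy n x1 y1) (dxy n x2 y2)"
    hence "dxy n x1 y1 1 \<le> dxy n x2 y2 1" "dxy n x1 y1 (1-h) \<le> dxy n x2 y2 (1-h)"
      using L1 Lh1 by (auto simp: der_le_def le_eq)
    thus "A_le (x1, y1) (x2, y2)" using dxy_at[OF L1] dxy_at[OF Lh1] h1 AP[OF p] AP[OF q]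
      by (simp add: A_le_def le_eq max_def split: if_splits)
  qed
  have lat: "dxy n (mv_sup x1 x2) (mv_sup y1 y2) = der_sup n (dxy n x1 y1) (dxy n x2 y2)
     \<and> dxy n (mv_inf x1 x2) (mv_inf y1 y2) = der_inf n (dxy n x1 y1) (dxy n x2 y2)"
    if p: "(x1, y1) \<in> AL n" and q: "(x2, y2) \<in> AL n" for x1 y1 x2 y2
  proof -
    note a = AP[OF p] AP[OF q]
    have R: "0 \<le> x1" "0 \<le> x2" "y1 \<le> 1" "y2 \<le> 1" using a hpos by auto
    show ?thesis
    proof (intro conjI ext)
      fix z show "dxy n (mv_sup x1 x2) (mv_sup y1 y2) z = der_sup n (dxy n x1 y1) (dxy n x2 y2) z"
      proof (cases "z \<in> Ln n")
        case True
        then show ?thesis using a R Ln_range[OF n True]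
          by (simp add: der_sup_def dxy_at sup_eq max_def)
      qed (simp add: der_sup_def dxy_def)
    next
      fix z show "dxy n (mv_inf x1 x2) (mv_inf y1 y2) z = der_inf n (dxy n x1 y1) (dxy n x2 y2) z"
      proof (cases "z \<in> Ln n")
        case True
        then show ?thesis using a R Ln_range[OF n True]
          by (simp add: der_inf_def dxy_at inf_eq max_def min_def)
      qed (simp add: der_inf_def dxy_def)
    qed
  qed
  have inDer: "dxy n x y \<in> Der n" if "(x, y) \<in> AL n" for x y
    using AP[OF that] dxy_Der[OF n] by blast
  have closed: "(max x1 x2, max y1 y2) \<in> AL n \<and> (min x1 x2, min y1 y2) \<in> AL n"
    if p: "(x1, y1) \<in> AL n" and q: "(x2, y2) \<in> AL n" for x1 y1 x2 y2
    using AP[OF p] AP[OF q] hpos by (auto simp: AL_def le_eq max_def min_def)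
  have part1: "\<forall>d\<in>Der n. \<forall>d'\<in>Der n. der_sup n d d' \<in> Der n \<and> der_inf n d d' \<in> Der n"
  proof (intro ballI)
    fix d d' assume "d \<in> Der n" "d' \<in> Der n"
    then obtain x1 y1 x2 y2 where p: "(x1, y1) \<in> AL n" "d = dxy n x1 y1"
      and q: "(x2, y2) \<in> AL n" "d' = dxy n x2 y2" using Der_form[OF n] by metis
    note a = AP[OF p(1)] AP[OF q(1)]
    have "mv_sup x1 x2 = max x1 x2" "mv_sup y1 y2 = max y1 y2"
      "mv_inf x1 x2 = min x1 x2" "mv_inf y1 y2 = min y1 y2"
      using a hpos by (auto simp: sup_eq inf_eq)
    then show "der_sup n d d' \<in> Der n \<and> der_inf n d d' \<in> Der n"
      using lat[OF p(1) q(1)] closed[OF p(1) q(1)] inDer p q by metis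
  qed
  have bij: "bij_betw (\<lambda>(x, y). dxy n x y) (AL n) (Der n)"
    unfolding bij_betw_def
  proof (intro conjI)
    show "inj_on (\<lambda>(x, y). dxy n x y) (AL n)"
      by (auto simp: inj_on_def dest: inj)
    show "(\<lambda>(x, y). dxy n x y) ` AL n = Der n"
    proof
      show "(\<lambda>(x, y). dxy n x y) ` AL n \<subseteq> Der n" using inDer by auto
      show "Der n \<subseteq> (\<lambda>(x, y). dxy n x y) ` AL n"
      proof
        fix d assume "d \<in> Der n"
        then obtain x y where "(x, y) \<in> AL n" "d = dxy n x y" using Der_form[OF n] by blast
        thus "d \<in> (\<lambda>(x, y). dxy n x y) ` AL n" by force
      qed
    qed
  qed
  show ?thesis using part1 bij ord lat by auto
qed

end
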